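(* Let $n\ge1$ and $P=\{(i,j)\colon1\le i\le j\le n\}$ be the shifted staircase. Then $\sum_{p\in P}T_p^-\equiv^q \frac{\binom{n+1}{2}_q}{[2n]_q}$.
   Context: $P$ is ordered by $(i,j)\le(i',j')$ iff $i\le i'$ and $j\le j'$. $\mathcal{J}(P)$ is the set of order ideals. For $p\in P$, $I\in\mathcal{J}(P)$: $T_p^+(I)=1$ if $p$ is minimal in $P\setminus I$, else $0$; $T_p^-(I)=1$ if $p$ is maximal in $I$, else $0$; $T_p^q=T_p^+-qT_p^-$ with $q$ an indeterminate. For $f,g\colon\mathcal{J}(P)\to\mathbb{R}(q)$, $f\equiv^q g$ means $f-g=\sum_{p\in P}c_p(q)T_p^q$ for some $c_p(q)\in\mathbb{R}(q)$; an element of $\mathbb{R}(q)$ denotes a constant function. $[m]_q=1+q+\dots+q^{m-1}$, $[m]_q!=[m]_q[m-1]_q\cdots[1]_q$, and $\binom{m}{k}_q=\frac{[m]_q!}{[k]_q![m-k]_q!}$. *)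

theory Defs
  imports Main "HOL-Computational_Algebra.Fraction_Field" "HOL-Computational_Algebra.Polynomial"
begin

type_synonym ratfun = "real poly fract"

definition qvar :: ratfun where
  "qvar = Fraction_Field.Fract [:0, 1:] 1"

definition qint :: "nat \<Rightarrow> ratfun" where
  "qint m = (\<Sum>k<m. qvar ^ k)"

definition qfact :: "nat \<Rightarrow> ratfun" where
  "qfact m = (\<Prod>k\<in>{1..m}. qint k)"

definition qbinom :: "nat \<Rightarrow> nat \<Rightarrow> ratfun" where
  "qbinom m k = qfact m / (qfact k * qfact (m - k))"

definition ple :: "nat \<times> nat \<Rightarrow> nat \<times> nat \<Rightarrow> bool" where
  "ple a b \<longleftrightarrow> fst a \<le> fst b \<and> snd a \<le> snd b"

definition shifted_staircase :: "nat \<Rightarrow> (nat \<times> nat) set" where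
  "shifted_staircase n = {(i, j). 1 \<le> i \<and> i \<le> j \<and> j \<le> n}"

definition order_ideals :: "(nat \<times> nat) set \<Rightarrow> (nat \<times> nat) set set" where
  "order_ideals P = {I. I \<subseteq> P \<and> (\<forall>x\<in>I. \<forall>y\<in>P. ple y x \<longrightarrow> y \<in> I)}"

definition Tplus :: "(nat \<times> nat) set \<Rightarrow> nat \<times> nat \<Rightarrow> (nat \<times> nat) set \<Rightarrow> ratfun" where
  "Tplus P p I = (if p \<in> P - I \<and> (\<forall>y\<in>P - I. ple y p \<longrightarrow> y = p) then 1 else 0)"

definition Tminus :: "(nat \<times> nat) set \<Rightarrow> nat \<times> nat \<Rightarrow> (nat \<times> nat) set \<Rightarrow> ratfun" where
  "Tminus P p I = (if p \<in> I \<and> (\<forall>y\<in>I. ple p y \<longrightarrow> y = p) then 1 else 0)"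

definition Tq :: "(nat \<times> nat) set \<Rightarrow> nat \<times> nat \<Rightarrow> (nat \<times> nat) set \<Rightarrow> ratfun" where
  "Tq P p I = Tplus P p I - qvar * Tminus P p I"

definition qequiv :: "(nat \<times> nat) set \<Rightarrow> ((nat \<times> nat) set \<Rightarrow> ratfun) \<Rightarrow> ((nat \<times> nat) set \<Rightarrow> ratfun) \<Rightarrow> bool" where
  "qequiv P f g \<longleftrightarrow> (\<exists>c :: nat \<times> nat \<Rightarrow> ratfun.
      \<forall>I\<in>order_ideals P. f I - g I = (\<Sum>p\<in>P. c p * Tq P p I))"

end

theory Submission
  imports Defs "HOL-Computational_Algebra.Polynomial_Factorial"
begin


lemma qpow: "qvar ^ k = to_fract ([:0,1:]^k)"
  by (induct k) (simp_all add: qvar_def to_fract_def One_fract_def)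

lemma to_fract_nz: "poly p x \<noteq> 0 \<Longrightarrow> to_fract p \<noteq> 0"
  by auto

lemma one_minus_qpow_nz: "k \<ge> 1 \<Longrightarrow> (1::ratfun) - qvar ^ k \<noteq> 0"
proof -
  assume k: "k \<ge> 1"
  have "(1::ratfun) - qvar ^ k = to_fract (1 - [:0,1:]^k)" by (simp add: qpow)
  moreover have "poly (1 - [:0,1:]^k) (2::real) \<noteq> 0"
  proof -
    have "(2::real)^k \<ge> 2^1" using k by (intro power_increasing) auto
    then show ?thesis by simp
  qed
  ultimately show ?thesis by (metis to_fract_nz)
qed

lemma one_plus_qpow_nz: "(1::ratfun) + qvar ^ k \<noteq> 0"
proof -
  have "(1::ratfun) + qvar ^ k = to_fract (1 + [:0,1:]^k)" by (simp add: qpow)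
  moreover have "poly (1 + [:0,1:]^k) (1::real) \<noteq> 0" by simp
  ultimately show ?thesis by (metis to_fract_nz)
qed

lemma q_ne1: "qvar \<noteq> 1" using one_minus_qpow_nz[of 1] by auto
lemma q_nem1: "1 + qvar \<noteq> 0" using one_plus_qpow_nz[of 1] by auto

lemma qint_eq: "qint m = (1 - qvar^m) / (1 - qvar)"
  unfolding qint_def using q_ne1 by (simp add: sum_gp_strict)

lemma qfact_Suc: "qfact (Suc m) = qint (Suc m) * qfact m"
  unfolding qfact_def by (simp add: atLeastAtMostSuc_conv mult.commute)

lemma qint_nz: "m \<ge> 1 \<Longrightarrow> qint m \<noteq> 0"
  using one_minus_qpow_nz q_ne1 by (simp add: qint_eq)

lemma qfact_nz: "qfact m \<noteq> 0"
  by (induct m) (auto simp: qfact_Suc qint_nz, simp add: qfact_def)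

lemma Cgen1:
  fixes a b c d N :: "'a::field"
  assumes "a \<noteq> 0" "b \<noteq> 0" "c \<noteq> 0" "d \<noteq> 0"
  shows "(N/a * (c/a) / b) / ((c*d)/a) = N/(a*b*d)"
  using assms by (simp add: field_simps)

lemma Cgen2:
  fixes a b d q :: "'a::field"
  assumes "a \<noteq> 0" "b \<noteq> 0" "d \<noteq> 0"
  shows "1/(a*d) - q/(a*b) = (b - q*d)/(a*b*d)"
  using assms by (simp add: field_simps)

lemma Cgen:
  fixes q y :: "'a::field"
  assumes "q \<noteq> 1" "1 + q \<noteq> 0" "y \<noteq> 1" "1 + y \<noteq> 0"
  shows "((1-q*y)/(1-q) * ((1-y)/(1-q)) / (1+q)) / (((1-y)*(1+y))/(1-q)) = 1/((1-q)*(1+y)) - q/((1-q)*(1+q))"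
proof -
  have nz: "1 - q \<noteq> 0" "1 + q \<noteq> 0" "1 - y \<noteq> 0" "1 + y \<noteq> 0" using assms by auto
  have e: "(1+q) - q*(1+y) = 1 - q*y" by (simp add: algebra_simps)
  show ?thesis
    unfolding Cgen1[OF nz] Cgen2[OF nz(1,2,4)] e ..
qed

lemma Cval:
  assumes "n \<ge> 1"
  shows "qbinom (n + 1) 2 / qint (2 * n) = 1/((1-qvar)*(1+qvar^n)) - qvar/((1-qvar)*(1+qvar))"
proof -
  obtain m where n: "n = Suc m" using assms by (cases n) auto
  have f: "qfact (n+1) = qint (n+1) * qint n * qfact m"
    by (simp add: n qfact_Suc)
  have f2: "qfact 2 = qint 2" by (simp add: numeral_2_eq_2 qfact_Suc, simp add: qfact_def qint_def)
  have b: "qbinom (n + 1) 2 = qint (n+1) * qint n / qint 2"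
    unfolding qbinom_def f f2 using qfact_nz[of m] by (simp add: n)
  have i2: "qint 2 = 1 + qvar" by (simp add: qint_def numeral_2_eq_2)
  have e1: "qint (n+1) = (1 - qvar * qvar^n)/(1-qvar)" by (simp add: qint_eq)
  have e2: "qint (2*n) = ((1 - qvar^n) * (1 + qvar^n))/(1-qvar)"
    by (simp add: qint_eq power_mult mult.commute power2_eq_square algebra_simps)
  have "qvar \<noteq> 1" using q_ne1 by auto
  moreover have "1 + qvar \<noteq> 0" using q_nem1 by auto
  moreover have "qvar^n \<noteq> 1" using one_minus_qpow_nz assms by auto
  moreover have "1 + qvar^n \<noteq> 0" using one_plus_qpow_nz by auto
  ultimately show ?thesis
    unfolding b i2 e1 e2 qint_eq[of n] by (rule Cgen)
qed



definition rr :: ratfun where "rr = 1/(1-qvar)"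
definition ss :: ratfun where "ss = 1/(1+qvar)"
definition AA :: "nat \<Rightarrow> ratfun" where "AA n = 1/((1-qvar)*(1+qvar^n))"
definition xx :: "nat \<Rightarrow> ratfun" where "xx i = qvar^(i-1)"
definition off :: "nat \<Rightarrow> ratfun \<Rightarrow> ratfun \<Rightarrow> ratfun" where "off n x y = rr - (x+y)*AA n"
definition dg :: "nat \<Rightarrow> ratfun \<Rightarrow> ratfun" where "dg n x = qvar*rr*ss - x*AA n"
definition cc :: "nat \<Rightarrow> nat \<times> nat \<Rightarrow> ratfun" where
  "cc n p = (if fst p = snd p then dg n (xx (fst p)) else off n (xx (fst p)) (xx (snd p)))"

lemma cc_simp: "cc n (a,b) = (if a = b then dg n (xx a) else off n (xx a) (xx b))"
  by (simp add: cc_def)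

lemma rr_eq: "rr*(1-qvar) = 1" using q_ne1 by (simp add: rr_def)
lemma ss_eq: "ss*(1+qvar) = 1" using q_nem1 by (simp add: ss_def)
lemma AA_eq: "AA n*((1-qvar)*(1+qvar^n)) = 1"
  using q_ne1 one_plus_qpow_nz[of n] by (simp add: AA_def)
lemma xx_Suc: "1 \<le> i \<Longrightarrow> xx (Suc i) = qvar * xx i"
  by (cases i) (auto simp: xx_def)
lemma xx_1: "xx 1 = 1" by (simp add: xx_def)
lemma xx_10 [simp]: "xx (Suc 0) = 1" by (simp add: xx_def)
lemma qpow_xx: "1 \<le> n \<Longrightarrow> qvar^n = qvar * xx n"
  by (cases n) (auto simp: xx_def)

lemma AA_eq': "1 \<le> n \<Longrightarrow> AA n*((1-qvar)*(1+qvar*xx n)) = 1"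
  using AA_eq[of n] qpow_xx[of n] by simp

lemma G1: "off n (qvar*x) (qvar*y) = 1 + qvar*off n x y"
  using rr_eq unfolding off_def by algebra

lemma k1: "1 + (1+qvar)*dg 1 1 = 0"
  using rr_eq ss_eq AA_eq[of 1] unfolding dg_def by algebra
lemma k2: "1+(1+qvar)*off 2 1 qvar = 1 + qvar*dg 2 1 + dg 2 qvar"
  using rr_eq ss_eq AA_eq[of 2] unfolding dg_def off_def power2_eq_square by algebra
lemma k3: "AA n*((1-qvar)*(1+qvar*y)) = 1 \<Longrightarrow> 1+(1+qvar)*off n 1 y = off n qvar y"
  using rr_eq ss_eq unfolding off_def by algebra
lemma k7: "1+(1+qvar)*dg n (qvar*x) = 1 + qvar*off n x (qvar*x)"
  using rr_eq ss_eq unfolding off_def dg_def by algebra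
lemma k8: "1+(1+qvar)*off n (qvar*x) (qvar*(qvar*x)) = (1 + qvar*off n x (qvar*(qvar*x))) + (1 + qvar*dg n (qvar*x) + dg n (qvar*(qvar*x)))"
  using rr_eq ss_eq unfolding off_def dg_def by algebra
lemma k9: "1+(1+qvar)*off n (qvar*x) y = (1 + qvar*off n x y) + off n (qvar*(qvar*x)) y"
  unfolding off_def dg_def by (simp add: algebra_simps)
lemma k10: "1+(1+qvar)*dg n x = off n x (qvar*x)"
  using rr_eq ss_eq unfolding off_def dg_def by algebra
lemma k11: "1+(1+qvar)*off n x (qvar*x) = off n x (qvar*(qvar*x)) + (1 + qvar*dg n x + dg n (qvar*x))"
  using rr_eq ss_eq unfolding off_def dg_def by algebra
lemma k12: "1+(1+qvar)*off n x y = off n x (qvar*y) + off n (qvar*x) y"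
  using rr_eq ss_eq unfolding off_def dg_def by algebra

lemma keyL:
  assumes "1 \<le> i" "i \<le> j" "j \<le> n" "a \<Longrightarrow> 2 \<le> i \<and> j < n"
  shows "(if 2 \<le> i \<and> (j = n \<or> \<not>a) then -(1 + qvar*cc n (i-1,j)) else 0)
       + (if j < n \<and> (i = 1 \<or> a) then - cc n (i,j+1) else 0)
       = - (if j = n then (if i = 1 then 0 else 1 + qvar*cc n (i-1,j)) else cc n (i,j+1))"
proof (cases "j = n")
  case True then show ?thesis using assms by auto
next
  case jn: False
  show ?thesis
  proof (cases "i = 1")
    case True with jn assms show ?thesis by auto
  next
    case i: False
    have e1: "xx i = qvar * xx (i-1)" using xx_Suc[of "i-1"] assms i by (cases i) auto
    have e2: "xx (Suc j) = qvar*xx j" using xx_Suc assms by simp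
    have ne: "i - 1 \<noteq> j" "i \<noteq> Suc j" using assms by auto
    have "1 + qvar*cc n (i-1,j) = cc n (i,j+1)"
      using assms i ne unfolding cc_simp by (simp add: G1 e1 e2)
    then show ?thesis using jn i assms by auto
  qed
qed

lemma keyR:
  assumes "1 \<le> i" "i \<le> j" "j \<le> n" "b \<Longrightarrow> i + 2 \<le> j"
  shows "(if i < j \<and> (i+1 = j \<or> \<not>b) then -(1+qvar*cc n (i,j-1)) else 0)
       + (if i < j \<and> (i+1 = j \<or> b) then - cc n (i+1,j) else 0)
       = - (if i = j then 0 else if i + 1 = j then 1 + qvar*cc n (i,i) + cc n (i+1,i+1) else cc n (i+1,j))"
proof (cases "i = j")
  case True then show ?thesis by auto
next
  case ij: False
  show ?thesis
  proof (cases "i + 1 = j")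
    case True with ij assms show ?thesis by auto
  next
    case i: False
    have e1: "xx j = qvar * xx (j-1)" using xx_Suc[of "j-1"] assms i ij by (cases j) auto
    have e2: "xx (Suc i) = qvar*xx i" using xx_Suc assms by simp
    have ne: "i \<noteq> j - 1" "Suc i \<noteq> j" using assms i ij by auto
    have "1 + qvar*cc n (i,j-1) = cc n (i+1,j)"
      using assms i ij ne unfolding cc_simp by (simp add: G1 e1 e2)
    then show ?thesis using ij i assms by auto
  qed
qed

lemma keyM:
  assumes "1 \<le> i" "i \<le> j" "j \<le> n"
  shows "1 + (1+qvar)*cc n (i,j) =
     (if j = n then (if i = 1 then 0 else 1 + qvar*cc n (i-1,j)) else cc n (i,j+1))
   + (if i = j then 0 else if i + 1 = j then 1 + qvar*cc n (i,i) + cc n (i+1,i+1) else cc n (i+1,j))"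
proof -
  have xj1: "xx (Suc j) = qvar * xx j" using xx_Suc assms by simp
  have xi1: "xx (Suc i) = qvar * xx i" using xx_Suc assms by simp
  have xi2: "xx (Suc (Suc i)) = qvar * (qvar * xx i)" using xx_Suc[of "Suc i"] assms xi1 by simp
  show ?thesis
  proof (cases "j = n")
    case jn: False
    show ?thesis
    proof (cases "i = j")
      case True then show ?thesis using jn assms k10[of n "xx i"] by (simp add: cc_simp xj1)
    next
      case ij: False
      show ?thesis
      proof (cases "i + 1 = j")
        case True
        then have jj: "j = Suc i" by simp
        show ?thesis using jn assms k11[of n "xx i"] xi2 unfolding jj by (simp add: cc_simp xi1)
      next
        case False
        then show ?thesis using ij jn assms k12[of n "xx i" "xx j"] by (simp add: cc_simp xi1 xj1)
      qed
    qed
  next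
    case jn: True
    show ?thesis
    proof (cases "i = 1")
      case i1: True
      show ?thesis
      proof (cases "i = j")
        case True then have "n = 1" using jn i1 by simp
        then show ?thesis using i1 True jn k1 by (simp add: cc_simp xx_1)
      next
        case ij: False
        show ?thesis
        proof (cases "i + 1 = j")
          case True then have n2: "n = 2" using jn i1 by simp
          have x2: "xx (Suc (Suc 0)) = qvar" "xx 2 = qvar" using xx_Suc[of 1] xx_1 by (simp_all add: numeral_2_eq_2)
          have j2: "j = 2" using jn n2 by simp
          show ?thesis unfolding j2 n2 i1 using k2 x2 by (simp add: cc_simp)
        next
          case False
          have "AA n*((1-qvar)*(1+qvar*xx n)) = 1" using AA_eq' assms by auto
          then show ?thesis using i1 ij False jn k3[of n "xx n"] xi1 by (simp add: cc_simp xx_1)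
        qed
      qed
    next
      case i1: False
      obtain k where k: "i = Suc k" "1 \<le> k" using assms i1 by (cases i) auto
      have xi: "xx i = qvar * xx k" using xx_Suc k by simp
      show ?thesis
      proof (cases "i = j")
        case True
        have e: "i = Suc k" "j = Suc k" "n = Suc k" using True jn k by auto
        show ?thesis unfolding e using k k7[of n "xx k"] xi unfolding e by (simp add: cc_simp)
      next
        case ij: False
        show ?thesis
        proof (cases "i + 1 = j")
          case True
          have e: "i = Suc k" "j = Suc (Suc k)" "n = Suc (Suc k)" using True jn k by auto
          have x3: "xx (Suc (Suc k)) = qvar * (qvar * xx k)" using xx_Suc[of "Suc k"] xi k by simp
          show ?thesis unfolding e using k k8[of n "xx k"] xi x3 unfolding e by (simp add: cc_simp)
        next
          case False
          have e: "i = Suc k" "n = j" using jn k by auto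
          have ne: "k \<noteq> j" "Suc k \<noteq> j" "Suc (Suc k) \<noteq> j" using False ij assms k by auto
          have x3: "xx (Suc (Suc k)) = qvar * (qvar * xx k)" using xx_Suc[of "Suc k"] xi k by simp
          show ?thesis unfolding e using k k9[of j "xx k" "xx j"] xi x3 ne unfolding e by (simp add: cc_simp)
        qed
      qed
    qed
  qed
qed



lemma memP: "(a,b) \<in> shifted_staircase n \<longleftrightarrow> 1 \<le> a \<and> a \<le> b \<and> b \<le> n"
  by (simp add: shifted_staircase_def)

lemma finP: "finite (shifted_staircase n)"
proof -
  have "shifted_staircase n \<subseteq> {0..n} \<times> {0..n}" by (auto simp: shifted_staircase_def)
  then show ?thesis by (rule finite_subset) auto
qed

lemma idealD:
  assumes "I \<in> order_ideals P"
  shows "I \<subseteq> P" "\<And>x y. x \<in> I \<Longrightarrow> y \<in> P \<Longrightarrow> ple y x \<Longrightarrow> y \<in> I"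
  using assms by (auto simp: order_ideals_def)

lemma Tplus_char:
  assumes I: "I \<in> order_ideals (shifted_staircase n)"
  shows "Tplus (shifted_staircase n) (a,b) I =
    (if (a,b) \<in> shifted_staircase n \<and> (a,b) \<notin> I \<and> (a = 1 \<or> (a-1,b) \<in> I) \<and> (b = a \<or> (a,b-1) \<in> I) then 1 else 0)"
proof -
  let ?P = "shifted_staircase n"
  note dc = idealD(2)[OF I]
  have "(\<forall>y\<in>?P - I. ple y (a,b) \<longrightarrow> y = (a,b)) \<longleftrightarrow> ((a = 1 \<or> (a-1,b) \<in> I) \<and> (b = a \<or> (a,b-1) \<in> I))"
    if ab: "(a,b) \<in> ?P"
  proof
    assume H: "\<forall>y\<in>?P - I. ple y (a,b) \<longrightarrow> y = (a,b)"
    have 1: "a = 1 \<or> (a-1,b) \<in> I"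
    proof (rule ccontr)
      assume "\<not> ?thesis"
      moreover have "(a-1,b) \<in> ?P" "ple (a-1,b) (a,b)" using ab calculation by (auto simp: memP ple_def)
      ultimately show False using H ab by (auto simp: memP)
    qed
    have 2: "b = a \<or> (a,b-1) \<in> I"
    proof (rule ccontr)
      assume "\<not> ?thesis"
      moreover have "(a,b-1) \<in> ?P" "ple (a,b-1) (a,b)" using ab calculation by (auto simp: memP ple_def)
      ultimately show False using H ab by (auto simp: memP)
    qed
    show "(a = 1 \<or> (a-1,b) \<in> I) \<and> (b = a \<or> (a,b-1) \<in> I)" using 1 2 by blast
  next
    assume H: "(a = 1 \<or> (a-1,b) \<in> I) \<and> (b = a \<or> (a,b-1) \<in> I)"
    show "\<forall>y\<in>?P - I. ple y (a,b) \<longrightarrow> y = (a,b)"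
    proof (intro ballI impI)
      fix y assume y: "y \<in> ?P - I" "ple y (a,b)"
      obtain c d where yc: "y = (c,d)" by (cases y)
      show "y = (a,b)"
      proof (rule ccontr)
        assume ne: "y \<noteq> (a,b)"
        show False
        proof (cases "c < a")
          case True
          then have "a \<noteq> 1" using y yc by (auto simp: memP)
          then have "(a-1,b) \<in> I" using H by blast
          moreover have "ple y (a-1,b)" using y yc True by (auto simp: ple_def)
          ultimately show False using dc y by blast
        next
          case False
          then have "c = a" "d < b" using y yc ne by (auto simp: ple_def)
          then have "b \<noteq> a" using y yc by (auto simp: memP)
          then have "(a,b-1) \<in> I" using H by blast
          moreover have "ple y (a,b-1)" using y yc \<open>c = a\<close> \<open>d < b\<close> by (auto simp: ple_def)
          ultimately show False using dc y by blast
        qed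
      qed
    qed
  qed
  then show ?thesis unfolding Tplus_def by auto
qed

lemma Tminus_char:
  assumes I: "I \<in> order_ideals (shifted_staircase n)"
  shows "Tminus (shifted_staircase n) (a,b) I =
    (if (a,b) \<in> I \<and> (b = n \<or> (a,b+1) \<notin> I) \<and> (a = b \<or> (a+1,b) \<notin> I) then 1 else 0)"
proof -
  let ?P = "shifted_staircase n"
  note dc = idealD(2)[OF I]
  note sub = idealD(1)[OF I]
  have "(\<forall>y\<in>I. ple (a,b) y \<longrightarrow> y = (a,b)) \<longleftrightarrow> ((b = n \<or> (a,b+1) \<notin> I) \<and> (a = b \<or> (a+1,b) \<notin> I))"
    if ab: "(a,b) \<in> I"
  proof
    assume H: "\<forall>y\<in>I. ple (a,b) y \<longrightarrow> y = (a,b)"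
    show "(b = n \<or> (a,b+1) \<notin> I) \<and> (a = b \<or> (a+1,b) \<notin> I)"
      using H by (auto simp: ple_def)
  next
    assume H: "(b = n \<or> (a,b+1) \<notin> I) \<and> (a = b \<or> (a+1,b) \<notin> I)"
    have abP: "(a,b) \<in> ?P" using ab sub by blast
    show "\<forall>y\<in>I. ple (a,b) y \<longrightarrow> y = (a,b)"
    proof (intro ballI impI)
      fix y assume y: "y \<in> I" "ple (a,b) y"
      obtain c d where yc: "y = (c,d)" by (cases y)
      have yP: "(c,d) \<in> ?P" using y yc sub by blast
      show "y = (a,b)"
      proof (rule ccontr)
        assume ne: "y \<noteq> (a,b)"
        show False
        proof (cases "b < d")
          case True
          have "(a,b+1) \<in> ?P" using abP yP True by (auto simp: memP)
          moreover have "ple (a,b+1) y" using y yc True by (auto simp: ple_def)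
          ultimately have "(a,b+1) \<in> I" using dc y by blast
          moreover have "b \<noteq> n" using True yP by (auto simp: memP)
          ultimately show False using H by blast
        next
          case False
          then have "d = b" "a < c" using y yc ne by (auto simp: ple_def)
          have "(a+1,b) \<in> ?P" using abP yP \<open>d = b\<close> \<open>a < c\<close> by (auto simp: memP)
          moreover have "ple (a+1,b) y" using y yc \<open>d = b\<close> \<open>a < c\<close> by (auto simp: ple_def)
          ultimately have "(a+1,b) \<in> I" using dc y by blast
          moreover have "a \<noteq> b" using \<open>d = b\<close> \<open>a < c\<close> yP by (auto simp: memP)
          ultimately show False using H by blast
        qed
      qed
    qed
  qed
  then show ?thesis unfolding Tminus_def by auto
qed

definition gg :: "nat \<Rightarrow> (nat \<times> nat) set \<Rightarrow> nat \<times> nat \<Rightarrow> ratfun" where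
  "gg n I x = (1 + qvar*cc n x)*Tminus (shifted_staircase n) x I - cc n x * Tplus (shifted_staircase n) x I"

lemma step:
  assumes I: "I \<in> order_ideals (shifted_staircase n)"
    and J: "insert (i,j) I \<in> order_ideals (shifted_staircase n)"
    and p: "(i,j) \<in> shifted_staircase n" "(i,j) \<notin> I"
    and lc: "i = 1 \<or> (i-1,j) \<in> I" "j = i \<or> (i,j-1) \<in> I"
  shows "(\<Sum>x\<in>shifted_staircase n. gg n (insert (i,j) I) x) = (\<Sum>x\<in>shifted_staircase n. gg n I x)"
proof -
  let ?P = "shifted_staircase n"
  let ?J = "insert (i,j) I"
  define h where "h x = gg n ?J x - gg n I x" for x
  have ij: "1 \<le> i" "i \<le> j" "j \<le> n" using p by (auto simp: memP)
  note dc = idealD(2)[OF I]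
  note sub = idealD(1)[OF I]
  have nI: "(i,j+1) \<notin> I" "(i+1,j) \<notin> I"
  proof -
    show "(i,j+1) \<notin> I"
    proof
      assume "(i,j+1) \<in> I"
      then have "(i,j) \<in> I" using dc[of "(i,j+1)" "(i,j)"] p by (auto simp: ple_def)
      then show False using p by blast
    qed
    show "(i+1,j) \<notin> I"
    proof
      assume "(i+1,j) \<in> I"
      then have "(i,j) \<in> I" using dc[of "(i+1,j)" "(i,j)"] p by (auto simp: ple_def)
      then show False using p by blast
    qed
  qed
  define N where "N = {(i,j),(i-1,j),(i,j+1),(i,j-1),(i+1,j)}"
  have hz: "h x = 0" if x: "x \<notin> N" for x
  proof -
    obtain a b where xab: "x = (a,b)" by (cases x)
    show ?thesis
    proof (cases "x \<in> ?P")
      case False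
      then have "(a,b) \<notin> I" "(a,b) \<notin> ?J" using sub idealD(1)[OF J] xab by auto
      then show ?thesis using False xab
        by (auto simp add: h_def gg_def Tplus_char[OF I] Tplus_char[OF J] Tminus_char[OF I] Tminus_char[OF J])
    next
      case True
      then have ab: "1 \<le> a" "a \<le> b" "b \<le> n" using xab by (auto simp: memP)
      have ne: "(a,b) \<noteq> (i,j)" "(a-1,b) \<noteq> (i,j)" "(a,b-1) \<noteq> (i,j)" "(a,b+1) \<noteq> (i,j)" "(a+1,b) \<noteq> (i,j)"
        using x xab ab ij unfolding N_def by auto
      have e: "((a,b) \<in> ?J) = ((a,b) \<in> I)" "((a-1,b) \<in> ?J) = ((a-1,b) \<in> I)"
        "((a,b-1) \<in> ?J) = ((a,b-1) \<in> I)" "((a,b+1) \<in> ?J) = ((a,b+1) \<in> I)"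
        "((a+1,b) \<in> ?J) = ((a+1,b) \<in> I)" using ne by auto
      have "Tplus ?P (a,b) ?J = Tplus ?P (a,b) I" unfolding Tplus_char[OF I] Tplus_char[OF J] e ..
      moreover have "Tminus ?P (a,b) ?J = Tminus ?P (a,b) I" unfolding Tminus_char[OF I] Tminus_char[OF J] e ..
      ultimately show ?thesis using xab by (simp add: h_def gg_def)
    qed
  qed
  have hP: "h x = 0" if x: "x \<notin> ?P" for x
  proof -
    obtain a b where xab: "x = (a,b)" by (cases x)
    then have "(a,b) \<notin> I" "(a,b) \<notin> ?J" using sub idealD(1)[OF J] x by auto
    then show ?thesis using x xab
      by (auto simp add: h_def gg_def Tplus_char[OF I] Tplus_char[OF J] Tminus_char[OF I] Tminus_char[OF J])
  qed
  have finN: "finite N" by (simp add: N_def)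
  have "(\<Sum>x\<in>?P. h x) = (\<Sum>x\<in>?P \<inter> N. h x)"
    by (rule sum.mono_neutral_right) (use finP hz in auto)
  also have "\<dots> = (\<Sum>x\<in>N. h x)"
    by (rule sum.mono_neutral_left) (use finN hP in auto)
  also have "\<dots> = h (i,j) + (h (i-1,j) + (h (i,j+1) + (h (i,j-1) + h (i+1,j))))"
  proof -
    have d: "(i,j) \<notin> {(i-1,j),(i,j+1),(i,j-1),(i+1,j)}" "(i-1,j) \<notin> {(i,j+1),(i,j-1),(i+1,j)}"
      "(i,j+1) \<notin> {(i,j-1),(i+1,j)}" "(i,j-1) \<notin> {(i+1,j)}" using ij by auto
    show ?thesis unfolding N_def
      by (subst sum.insert[OF _ d(1)], simp, subst sum.insert[OF _ d(2)], simp,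
          subst sum.insert[OF _ d(3)], simp, subst sum.insert[OF _ d(4)], simp_all)
  qed
  finally have sumh: "(\<Sum>x\<in>?P. h x) = h (i,j) + (h (i-1,j) + (h (i,j+1) + (h (i,j-1) + h (i+1,j))))" .
  have hp: "h (i,j) = 1 + (1+qvar)*cc n (i,j)"
    using p nI lc ij
    by (simp add: h_def gg_def Tplus_char[OF I] Tplus_char[OF J] Tminus_char[OF I] Tminus_char[OF J] algebra_simps)
  have h1: "h (i-1,j) = (if 2 \<le> i \<and> (j = n \<or> (i-1,j+1) \<notin> I) then -(1 + qvar*cc n (i-1,j)) else 0)"
  proof (cases "i = 1")
    case True then show ?thesis using hP[of "(i-1,j)"] by (simp add: memP)
  next
    case False
    then have "(i-1,j) \<in> I" "i - 1 \<noteq> j" "(i-1,j) \<noteq> (i,j)" "(i-1,j+1) \<noteq> (i,j)" "(i-1+1,j) = (i,j)" "2 \<le> i" using lc ij by auto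
    then show ?thesis using p
      by (simp add: h_def gg_def Tplus_char[OF I] Tplus_char[OF J] Tminus_char[OF I] Tminus_char[OF J])
  qed
  have h2: "h (i,j+1) = (if j < n \<and> (i = 1 \<or> (i-1,j+1) \<in> I) then - cc n (i,j+1) else 0)"
  proof (cases "j = n")
    case True then show ?thesis using hP[of "(i,j+1)"] by (simp add: memP)
  next
    case False
    then have "(i,j+1) \<in> ?P" "(i,j+1) \<notin> ?J" "(i-1,j+1) \<noteq> (i,j)" "j + 1 \<noteq> i" "j < n" using nI ij by (auto simp: memP)
    then show ?thesis using p
      by (simp add: h_def gg_def Tplus_char[OF I] Tplus_char[OF J] Tminus_char[OF I] Tminus_char[OF J])
  qed
  have h3: "h (i,j-1) = (if i < j \<and> (i+1 = j \<or> (i+1,j-1) \<notin> I) then -(1+qvar*cc n (i,j-1)) else 0)"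
  proof (cases "i = j")
    case True then show ?thesis using hP[of "(i,j-1)"] ij by (simp add: memP)
  next
    case False
    then have "(i,j-1) \<in> I" "j - 1 \<noteq> n" "(i,j-1) \<noteq> (i,j)" "(i+1,j-1) \<noteq> (i,j)" "(i,j-1+1) = (i,j)" "i < j"
      "(i = j - 1) = (i + 1 = j)" using lc ij by auto
    then show ?thesis using p
      by (simp add: h_def gg_def Tplus_char[OF I] Tplus_char[OF J] Tminus_char[OF I] Tminus_char[OF J])
  qed
  have h4: "h (i+1,j) = (if i < j \<and> (i+1 = j \<or> (i+1,j-1) \<in> I) then - cc n (i+1,j) else 0)"
  proof (cases "i = j")
    case True then show ?thesis using hP[of "(i+1,j)"] by (simp add: memP)
  next
    case False
    then have "(i+1,j) \<in> ?P" "(i+1,j) \<notin> ?J" "(i+1,j-1) \<noteq> (i,j)" "i + 1 \<noteq> 1" "i < j"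
      "(j = i + 1) = (i + 1 = j)" using nI ij by (auto simp: memP)
    then show ?thesis using p
      by (simp add: h_def gg_def Tplus_char[OF I] Tplus_char[OF J] Tminus_char[OF I] Tminus_char[OF J])
  qed
  have aP: "2 \<le> i \<and> j < n" if "(i-1,j+1) \<in> I"
  proof -
    have "(i-1,j+1) \<in> ?P" using that sub by blast
    then show ?thesis unfolding memP by linarith
  qed
  have bP: "i + 2 \<le> j" if "(i+1,j-1) \<in> I"
  proof -
    have "(i+1,j-1) \<in> ?P" using that sub by blast
    then show ?thesis unfolding memP by linarith
  qed
  have "h (i-1,j) + h (i,j+1) = - (if j = n then (if i = 1 then 0 else 1 + qvar*cc n (i-1,j)) else cc n (i,j+1))"
    unfolding h1 h2 by (rule keyL[OF ij aP])
  moreover have "h (i,j-1) + h (i+1,j) = - (if i = j then 0 else if i + 1 = j then 1 + qvar*cc n (i,i) + cc n (i+1,i+1) else cc n (i+1,j))"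
    unfolding h3 h4 by (rule keyR[OF ij bP])
  ultimately have "(\<Sum>x\<in>?P. h x) = 0"
    unfolding sumh hp add.assoc[symmetric] using keyM[OF ij]
    by (simp add: add.assoc)
  then show ?thesis unfolding h_def sum_subtractf by simp
qed

lemma base:
  assumes n: "1 \<le> n" and E: "{} \<in> order_ideals (shifted_staircase n)"
  shows "(\<Sum>x\<in>shifted_staircase n. gg n {} x) = - cc n (1,1)"
proof -
  let ?P = "shifted_staircase n"
  have "gg n {} x = (if x = (1,1) then - cc n (1,1) else 0)" if "x \<in> ?P" for x
  proof -
    obtain a b where xab: "x = (a,b)" by (cases x)
    show ?thesis using that xab
      by (auto simp: gg_def Tplus_char[OF E] Tminus_char[OF E] memP)
  qed
  then have "(\<Sum>x\<in>?P. gg n {} x) = (\<Sum>x\<in>?P. if x = (1,1) then - cc n (1,1) else 0)"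
    by (rule sum.cong[OF refl])
  also have "\<dots> = - cc n (1,1)" using n finP[of n] by (simp add: memP)
  finally show ?thesis .
qed

lemma main_ind:
  assumes n: "1 \<le> n"
  shows "I \<in> order_ideals (shifted_staircase n) \<Longrightarrow> (\<Sum>x\<in>shifted_staircase n. gg n I x) = - cc n (1,1)"
proof (induction "card I" arbitrary: I)
  case 0
  have "finite I" using idealD(1)[OF 0(2)] finP finite_subset by blast
  then have "I = {}" using 0(1) by simp
  then show ?case using base[OF n] 0(2) by simp
next
  case (Suc k)
  let ?P = "shifted_staircase n"
  note I = Suc(3)
  note dc = idealD(2)[OF I]
  note sub = idealD(1)[OF I]
  have finI: "finite I" using sub finP finite_subset by blast
  have ne: "I \<noteq> {}" using Suc(2) by auto
  define f where "f x = fst x + snd x" for x :: "nat \<times> nat"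
  have "Max (f ` I) \<in> f ` I" using finI ne by simp
  then obtain p where pI: "p \<in> I" and pm: "f p = Max (f ` I)" by auto
  have mx: "f x \<le> f p" if "x \<in> I" for x using that finI pm by simp
  obtain i j where pij: "p = (i,j)" by (cases p)
  define I0 where "I0 = I - {(i,j)}"
  have pP: "(i,j) \<in> ?P" using pI pij sub by blast
  have ij: "1 \<le> i" "i \<le> j" "j \<le> n" using pP by (auto simp: memP)
  have I0: "I0 \<in> order_ideals ?P"
    unfolding order_ideals_def
  proof (intro CollectI conjI ballI impI)
    show "I0 \<subseteq> ?P" using sub I0_def by blast
    fix x y assume x: "x \<in> I0" and y: "y \<in> ?P" and le: "ple y x"
    have "y \<in> I" using dc[of x y] x y le I0_def by blast
    moreover have "y \<noteq> (i,j)"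
    proof
      assume "y = (i,j)"
      then have "f x > f p" using le x pij I0_def by (cases x) (auto simp: ple_def f_def)
      then show False using mx[of x] x I0_def by auto
    qed
    ultimately show "y \<in> I0" using I0_def by blast
  qed
  have card: "k = card I0" using Suc(2) pI pij finI I0_def by simp
  have IH: "(\<Sum>x\<in>?P. gg n I0 x) = - cc n (1,1)" using Suc(1)[OF card I0] .
  have nI0: "(i,j) \<notin> I0" using I0_def by blast
  have l1: "i = 1 \<or> (i-1,j) \<in> I0"
  proof (cases "i = 1")
    case True then show ?thesis by simp
  next
    case False
    then have "i \<noteq> 1" by simp
    then have "(i-1,j) \<in> ?P" "ple (i-1,j) (i,j)" using ij by (auto simp: memP ple_def)
    then have "(i-1,j) \<in> I" using dc pI pij by blast
    then show ?thesis using I0_def \<open>i \<noteq> 1\<close> ij by auto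
  qed
  have l2: "j = i \<or> (i,j-1) \<in> I0"
  proof (cases "j = i")
    case True then show ?thesis by simp
  next
    case False
    then have "j \<noteq> i" by simp
    then have "(i,j-1) \<in> ?P" "ple (i,j-1) (i,j)" using ij by (auto simp: memP ple_def)
    then have "(i,j-1) \<in> I" using dc pI pij by blast
    then show ?thesis using I0_def \<open>j \<noteq> i\<close> ij by auto
  qed
  have ins: "insert (i,j) I0 = I" using I0_def pI pij by blast
  have "(\<Sum>x\<in>?P. gg n (insert (i,j) I0) x) = (\<Sum>x\<in>?P. gg n I0 x)"
    by (rule step[OF I0 _ pP nI0 l1 l2]) (use ins I in simp)
  then show ?case using IH ins by simp
qed

lemma C_cc: "1 \<le> n \<Longrightarrow> qbinom (n + 1) 2 / qint (2 * n) = - cc n (1,1)"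
  unfolding Cval by (simp add: cc_simp dg_def rr_def ss_def AA_def)

theorem theorem5p15:
  fixes n :: nat
  assumes "n \<ge> 1"
  shows "qequiv (shifted_staircase n)
           (\<lambda>I. \<Sum>p\<in>shifted_staircase n. Tminus (shifted_staircase n) p I)
           (\<lambda>I. qbinom (n + 1) 2 / qint (2 * n))"
  unfolding qequiv_def
proof (intro exI[of _ "cc n"] ballI)
  fix I assume I: "I \<in> order_ideals (shifted_staircase n)"
  let ?P = "shifted_staircase n"
  have g: "gg n I x = Tminus ?P x I - cc n x * Tq ?P x I" for x
    by (simp add: gg_def Tq_def algebra_simps)
  have "(\<Sum>x\<in>?P. gg n I x) = (\<Sum>x\<in>?P. Tminus ?P x I) - (\<Sum>x\<in>?P. cc n x * Tq ?P x I)"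
    unfolding g by (rule sum_subtractf)
  then have "(\<Sum>x\<in>?P. Tminus ?P x I) - (\<Sum>x\<in>?P. cc n x * Tq ?P x I) = - cc n (1,1)"
    using main_ind[OF assms I] by simp
  then show "(\<Sum>p\<in>?P. Tminus ?P p I) - qbinom (n + 1) 2 / qint (2 * n) = (\<Sum>p\<in>?P. cc n p * Tq ?P p I)"
    unfolding C_cc[OF assms] by (simp add: algebra_simps)
qed

end
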